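(* Let $S$ be a dense subsemigroup of $((0,\infty),+)$, let $(X,\langle T_s\rangle_{s\in S})$ be a dynamical system, let $L$ be a minimal left ideal of $O^{+}(S)$, and let $x\in X$. The following statements are equivalent: (a) $x$ is a uniformly recurrent point near zero of $(X,\langle T_s\rangle_{s\in S})$; (b) there exists $u\in L$ such that $T_u(x)=x$; (c) there exist $y\in X$ and an idempotent $u\in L$ such that $T_u(y)=x$; (d) there exists an idempotent $u\in L$ such that $T_u(x)=x$.
   Context: "Dense" means dense in the usual topology of $(0,\infty)$. $\beta S$ is the Stone–Čech compactification of the discrete set $S$ (the space of ultrafilters on $S$, principal ultrafilters identified with points of $S$), with the operation $+$ extended so that $(\beta S,+)$ is a compact right topological semigroup: for $p,q\in\beta S$ and $A\subseteq S$, $A\in p+q$ iff $\{x\in S: -x+A\in q\}\in p$, where $-x+A=\{y\in S: x+y\in A\}$. Define $O^{+}(S)=\{p\in\beta S: S\cap(0,\epsilon)\in p \text{ for every } \epsilon>0\}$; it is a compact right topological subsemigroup of $\beta S$. A dynamical system $(X,\langle T_s\rangle_{s\in S})$ consists of a compact Hausdorff space $X$ and continuous maps $T_s:X\to X$ ($s\in S$) with $T_s\circ T_t=T_{s+t}$ for all $s,t\in S$. For $p\in\beta S$ and $x\in X$, $T_p(x)=p\text{-}\lim_{s\in S}T_s(x)$ (i.e. $T_p=\tilde\theta(p)$ where $\tilde\theta:\beta S\to X^X$ is the continuous extension of $s\mapsto T_s$); then $T_p\circ T_q=T_{p+q}$. A subset $B\subseteq S$ is syndetic near zero iff for every $\epsilon>0$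 there exist a finite nonempty $F\subseteq (0,\epsilon)\cap S$ and $\delta>0$ such that $S\cap(0,\delta)\subseteq\bigcup_{t\in F}(-t+B)$. A point $x\in X$ is uniformly recurrent near zero iff for each neighbourhood $W$ of $x$, the set $\{s\in S: T_s(x)\in W\}$ is syndetic near zero. *)

theory Defs
  imports "HOL-Analysis.Analysis"
begin

text \<open>Ultrafilters on a set S of reals, represented as families of subsets of S
  (points of the Stone-Cech compactification beta S).\<close>
definition ultrafilter_on :: "real set \<Rightarrow> real set set \<Rightarrow> bool" where
  "ultrafilter_on S p \<longleftrightarrow>
     p \<subseteq> Pow S \<and> S \<in> p \<and> {} \<notin> p \<and>
     (\<forall>A\<in>p. \<forall>B\<in>p. A \<inter> B \<in> p) \<and>
     (\<forall>A\<in>p. \<forall>B. A \<subseteq> B \<and> B \<subseteq> S \<longrightarrow> B \<in> p) \<and>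
     (\<forall>A. A \<subseteq> S \<longrightarrow> A \<in> p \<or> S - A \<in> p)"

definition betaS :: "real set \<Rightarrow> real set set set" where
  "betaS S = {p. ultrafilter_on S p}"

definition lshift :: "real set \<Rightarrow> real \<Rightarrow> real set \<Rightarrow> real set" where
  "lshift S x A = {y\<in>S. x + y \<in> A}"

definition uplus :: "real set \<Rightarrow> real set set \<Rightarrow> real set set \<Rightarrow> real set set" where
  "uplus S p q = {A. A \<subseteq> S \<and> {x\<in>S. lshift S x A \<in> q} \<in> p}"

definition Oplus :: "real set \<Rightarrow> real set set set" where
  "Oplus S = {p\<in>betaS S. \<forall>\<epsilon>>0. S \<inter> {0<..<\<epsilon>} \<in> p}"

definition left_ideal_of :: "real set \<Rightarrow> real set set set \<Rightarrow> real set set set \<Rightarrow> bool" where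
  "left_ideal_of S M L \<longleftrightarrow> L \<noteq> {} \<and> L \<subseteq> M \<and> (\<forall>p\<in>M. \<forall>q\<in>L. uplus S p q \<in> L)"

definition minimal_left_ideal_of :: "real set \<Rightarrow> real set set set \<Rightarrow> real set set set \<Rightarrow> bool" where
  "minimal_left_ideal_of S M L \<longleftrightarrow> left_ideal_of S M L \<and>
     (\<forall>K. left_ideal_of S M K \<and> K \<subseteq> L \<longrightarrow> K = L)"

definition dense_subsemigroup :: "real set \<Rightarrow> bool" where
  "dense_subsemigroup S \<longleftrightarrow> S \<subseteq> {0<..} \<and> (\<forall>s\<in>S. \<forall>t\<in>S. s + t \<in> S) \<and>
     {0<..} \<subseteq> closure S"

text \<open>Dynamical system: compact Hausdorff space X (a compact subset of a Hausdorff
  type, with the subspace topology) and continuous maps T s : X \<rightarrow> X.\<close>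
definition dynamical_system :: "real set \<Rightarrow> 'a::t2_space set \<Rightarrow> (real \<Rightarrow> 'a \<Rightarrow> 'a) \<Rightarrow> bool" where
  "dynamical_system S X T \<longleftrightarrow> compact X \<and>
     (\<forall>s\<in>S. continuous_on X (T s) \<and> T s ` X \<subseteq> X) \<and>
     (\<forall>s\<in>S. \<forall>t\<in>S. \<forall>y\<in>X. T s (T t y) = T (s + t) y)"

definition plim :: "real set \<Rightarrow> real set set \<Rightarrow> (real \<Rightarrow> 'a::t2_space) \<Rightarrow> 'a" where
  "plim S p f = (THE z. \<forall>W. open W \<and> z \<in> W \<longrightarrow> {s\<in>S. f s \<in> W} \<in> p)"

definition Tp :: "real set \<Rightarrow> (real \<Rightarrow> 'a \<Rightarrow> 'a::t2_space) \<Rightarrow> real set set \<Rightarrow> 'a \<Rightarrow> 'a" where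
  "Tp S T p x = plim S p (\<lambda>s. T s x)"

definition syndetic_near_zero :: "real set \<Rightarrow> real set \<Rightarrow> bool" where
  "syndetic_near_zero S B \<longleftrightarrow>
     (\<forall>\<epsilon>>0. \<exists>F. finite F \<and> F \<noteq> {} \<and> F \<subseteq> {0<..<\<epsilon>} \<inter> S \<and>
        (\<exists>\<delta>>0. S \<inter> {0<..<\<delta>} \<subseteq> (\<Union>t\<in>F. lshift S t B)))"

definition unif_recurrent_near_zero :: "real set \<Rightarrow> (real \<Rightarrow> 'a \<Rightarrow> 'a::t2_space) \<Rightarrow> 'a \<Rightarrow> bool" where
  "unif_recurrent_near_zero S T x \<longleftrightarrow>
     (\<forall>W. open W \<and> x \<in> W \<longrightarrow> syndetic_near_zero S {s\<in>S. T s x \<in> W})"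

end

theory Submission
  imports Defs
begin

lemma uf_facts:
  assumes "ultrafilter_on S p"
  shows "p \<subseteq> Pow S" "S \<in> p" "{} \<notin> p" "\<forall>A\<in>p. \<forall>B\<in>p. A \<inter> B \<in> p"
    "\<forall>A\<in>p. \<forall>B. A \<subseteq> B \<and> B \<subseteq> S \<longrightarrow> B \<in> p" "\<forall>A. A \<subseteq> S \<longrightarrow> A \<in> p \<or> S - A \<in> p"
  using assms unfolding ultrafilter_on_def by simp_all

lemma uf_sub: "ultrafilter_on S p \<Longrightarrow> A \<in> p \<Longrightarrow> A \<subseteq> S"
  using uf_facts(1) by fastforce
lemma uf_S: "ultrafilter_on S p \<Longrightarrow> S \<in> p"
  using uf_facts(2) .
lemma uf_empty: "ultrafilter_on S p \<Longrightarrow> {} \<notin> p"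
  using uf_facts(3) .
lemma uf_int: "ultrafilter_on S p \<Longrightarrow> A \<in> p \<Longrightarrow> B \<in> p \<Longrightarrow> A \<inter> B \<in> p"
  using uf_facts(4) by metis
lemma uf_mono: "ultrafilter_on S p \<Longrightarrow> A \<in> p \<Longrightarrow> A \<subseteq> B \<Longrightarrow> B \<subseteq> S \<Longrightarrow> B \<in> p"
  using uf_facts(5) by metis
lemma uf_compl: "ultrafilter_on S p \<Longrightarrow> A \<subseteq> S \<Longrightarrow> A \<in> p \<or> S - A \<in> p"
  using uf_facts(6) by metis
lemma uf_mono': "ultrafilter_on S p \<Longrightarrow> A \<in> p \<Longrightarrow> A \<subseteq> B \<Longrightarrow> B \<inter> S \<in> p"
proof -
  assume u: "ultrafilter_on S p" and a: "A \<in> p" and b: "A \<subseteq> B"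
  have "A \<subseteq> B \<inter> S" using b uf_sub[OF u a] by blast
  then show ?thesis using uf_mono[OF u a] by blast
qed
lemma uf_ne: "ultrafilter_on S p \<Longrightarrow> A \<in> p \<Longrightarrow> A \<noteq> {}"
  using uf_empty by metis
lemma uf_not_both: "ultrafilter_on S p \<Longrightarrow> A \<in> p \<Longrightarrow> S - A \<notin> p"
proof
  assume u: "ultrafilter_on S p" and "A \<in> p" "S - A \<in> p"
  then have "A \<inter> (S - A) \<in> p" using uf_int[OF u] by blast
  then show False using uf_empty[OF u] by simp
qed


lemma uf_finite_union:
  assumes u: "ultrafilter_on S p" and f: "finite F" and sub: "\<forall>A\<in>F. A \<subseteq> S" and un: "\<Union>F \<in> p"
  shows "\<exists>A\<in>F. A \<in> p"
  using f sub un
proof (induction F rule: finite_induct)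
  case empty then show ?case using uf_empty[OF u] by simp
next
  case (insert A F)
  show ?case
  proof (cases "A \<in> p")
    case True then show ?thesis by simp
  next
    case False
    have AS: "A \<subseteq> S" using insert.prems by simp
    have "S - A \<in> p" using uf_compl[OF u AS] False by simp
    then have "(S - A) \<inter> \<Union>(insert A F) \<in> p" using uf_int[OF u] insert.prems(2) by simp
    moreover have "(S - A) \<inter> \<Union>(insert A F) \<subseteq> \<Union>F" by blast
    moreover have "\<Union>F \<subseteq> S" using insert.prems by auto
    ultimately have "\<Union>F \<in> p" using uf_mono[OF u] by metis
    moreover have "\<forall>A\<in>F. A \<subseteq> S" using insert.prems by simp
    ultimately have "\<exists>A\<in>F. A \<in> p" using insert.IH by simp
    then show ?thesis by simp
  qed
qed

lemma uf_eq:
  assumes u: "ultrafilter_on S p" and v: "ultrafilter_on S q" and sub: "p \<subseteq> q"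
  shows "p = q"
proof
  show "q \<subseteq> p"
  proof
    fix A assume A: "A \<in> q"
    show "A \<in> p"
    proof (rule ccontr)
      assume "A \<notin> p"
      then have "S - A \<in> p" using uf_compl[OF u uf_sub[OF v A]] by simp
      then have "S - A \<in> q" using sub by blast
      then show False using uf_not_both[OF v A] by simp
    qed
  qed
qed (rule sub)

definition fip :: "real set \<Rightarrow> real set set \<Rightarrow> bool" where
  "fip S F \<longleftrightarrow> (\<forall>G. finite G \<and> G \<subseteq> F \<longrightarrow> S \<inter> \<Inter>G \<noteq> {})"

lemma fip_insert:
  assumes "fip S M" and h: "\<And>G. finite G \<Longrightarrow> G \<subseteq> M \<Longrightarrow> S \<inter> B \<inter> \<Inter>G \<noteq> {}"
  shows "fip S (insert B M)"
  unfolding fip_def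
proof (intro allI impI)
  fix G assume G: "finite G \<and> G \<subseteq> insert B M"
  show "S \<inter> \<Inter>G \<noteq> {}"
  proof (cases "B \<in> G")
    case True
    have "\<Inter>G = B \<inter> \<Inter>(G - {B})" using True by blast
    moreover have "S \<inter> B \<inter> \<Inter>(G - {B}) \<noteq> {}" using h[of "G - {B}"] G by blast
    ultimately show ?thesis by (simp add: Int_assoc)
  next
    case False
    then have "G \<subseteq> M" using G by blast
    then show ?thesis using assms(1) G unfolding fip_def by blast
  qed
qed

lemma fip_sub: "fip S M \<Longrightarrow> finite G \<Longrightarrow> G \<subseteq> M \<Longrightarrow> S \<inter> \<Inter>G \<noteq> {}"
  unfolding fip_def by blast

lemma ultrafilter_exists:
  assumes F: "F \<subseteq> Pow S" and fF: "fip S F"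
  shows "\<exists>p. ultrafilter_on S p \<and> F \<subseteq> p"
proof -
  define A where "A = {G. F \<subseteq> G \<and> G \<subseteq> Pow S \<and> fip S G}"
  have "\<exists>M\<in>A. \<forall>X\<in>A. M \<subseteq> X \<longrightarrow> X = M"
  proof (rule Zorn_Lemma2, intro ballI)
    fix C assume C: "C \<in> chains A"
    show "\<exists>U\<in>A. \<forall>X\<in>C. X \<subseteq> U"
    proof (cases "C = {}")
      case True
      have "F \<in> A" unfolding A_def using F fF by blast
      then show ?thesis using True by blast
    next
      case False
      have CA: "C \<subseteq> A" using chainsD2[OF C] .
      have "\<Union>C \<in> A"
        unfolding A_def
      proof (intro CollectI conjI)
        obtain X where X: "X \<in> C" using False by blast
        show "F \<subseteq> \<Union>C" using X CA unfolding A_def by blast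
        show "\<Union>C \<subseteq> Pow S" using CA unfolding A_def by blast
        show "fip S (\<Union>C)" unfolding fip_def
        proof (intro allI impI)
          fix G assume G: "finite G \<and> G \<subseteq> \<Union>C"
          have ch: "subset.chain A C" using C by (simp add: chains_alt_def)
          obtain B where B: "B \<in> C" "G \<subseteq> B"
            using finite_subset_Union_chain[of G C A] G False ch by blast
          have "fip S B" using B(1) CA unfolding A_def by blast
          then show "S \<inter> \<Inter>G \<noteq> {}" using G B(2) unfolding fip_def by blast
        qed
      qed
      then show ?thesis by blast
    qed
  qed
  then obtain M where MA: "M \<in> A" and max: "\<And>X. X \<in> A \<Longrightarrow> M \<subseteq> X \<Longrightarrow> X = M" by blast
  have FM: "F \<subseteq> M" and MS: "M \<subseteq> Pow S" and fM: "fip S M" using MA unfolding A_def by auto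
  have add: "B \<in> M" if "B \<subseteq> S" and "fip S (insert B M)" for B
  proof -
    have "insert B M \<in> A" unfolding A_def using FM MS that by blast
    then have "insert B M = M" using max by blast
    then show ?thesis by blast
  qed
  have "ultrafilter_on S M"
    unfolding ultrafilter_on_def
  proof (intro conjI ballI allI impI)
    show "M \<subseteq> Pow S" by (rule MS)
    show "S \<in> M"
    proof (rule add)
      show "fip S (insert S M)"
      proof (rule fip_insert[OF fM])
        fix G assume "finite G" "G \<subseteq> M"
        then have "S \<inter> \<Inter>G \<noteq> {}" by (rule fip_sub[OF fM])
        then show "S \<inter> S \<inter> \<Inter>G \<noteq> {}" by simp
      qed
    qed simp
    show "{} \<notin> M"
    proof
      assume "{} \<in> M"
      then show False using fip_sub[OF fM, of "{{}}"] by simp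
    qed
  next
    fix X Y assume X: "X \<in> M" and Y: "Y \<in> M"
    show "X \<inter> Y \<in> M"
    proof (rule add)
      show "X \<inter> Y \<subseteq> S" using X MS by blast
      show "fip S (insert (X \<inter> Y) M)"
      proof (rule fip_insert[OF fM])
        fix G assume "finite G" "G \<subseteq> M"
        then have "S \<inter> \<Inter>(insert X (insert Y G)) \<noteq> {}" using X Y fip_sub[OF fM, of "insert X (insert Y G)"] by simp
        moreover have "S \<inter> \<Inter>(insert X (insert Y G)) = S \<inter> (X \<inter> Y) \<inter> \<Inter>G" by auto
        ultimately show "S \<inter> (X \<inter> Y) \<inter> \<Inter>G \<noteq> {}" by simp
      qed
    qed
  next
    fix X Y assume X: "X \<in> M" and Y: "X \<subseteq> Y \<and> Y \<subseteq> S"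
    show "Y \<in> M"
    proof (rule add)
      show "Y \<subseteq> S" using Y by blast
      show "fip S (insert Y M)"
      proof (rule fip_insert[OF fM])
        fix G assume "finite G" "G \<subseteq> M"
        then have "S \<inter> \<Inter>(insert X G) \<noteq> {}" using X fip_sub[OF fM, of "insert X G"] by simp
        moreover have "S \<inter> \<Inter>(insert X G) \<subseteq> S \<inter> Y \<inter> \<Inter>G" using Y by auto
        ultimately show "S \<inter> Y \<inter> \<Inter>G \<noteq> {}" by blast
      qed
    qed
  next
    fix X assume XS: "X \<subseteq> S"
    show "X \<in> M \<or> S - X \<in> M"
    proof (rule ccontr)
      assume nn: "\<not> (X \<in> M \<or> S - X \<in> M)"
      have "\<not> fip S (insert X M)" using add XS nn by blast
      then obtain G1 where G1: "finite G1" "G1 \<subseteq> M" "S \<inter> X \<inter> \<Inter>G1 = {}"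
        using fip_insert[OF fM, of X] by blast
      have "\<not> fip S (insert (S - X) M)" using add nn by blast
      then obtain G2 where G2: "finite G2" "G2 \<subseteq> M" "S \<inter> (S - X) \<inter> \<Inter>G2 = {}"
        using fip_insert[OF fM, of "S - X"] by blast
      have "S \<inter> \<Inter>(G1 \<union> G2) \<noteq> {}" using fip_sub[OF fM, of "G1 \<union> G2"] G1 G2 by simp
      moreover have "S \<inter> \<Inter>(G1 \<union> G2) = {}" using G1(3) G2(3) by blast
      ultimately show False by simp
    qed
  qed
  then show ?thesis using FM by blast
qed


definition sg :: "real set \<Rightarrow> bool" where "sg S \<longleftrightarrow> (\<forall>s\<in>S. \<forall>t\<in>S. s + t \<in> S)"

lemma sgD: "sg S \<Longrightarrow> s \<in> S \<Longrightarrow> t \<in> S \<Longrightarrow> s + t \<in> S"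
  unfolding sg_def by blast

lemma lshift_sub: "lshift S x A \<subseteq> S"
  unfolding lshift_def by blast

lemma uplus_mem: "A \<in> uplus S p q \<longleftrightarrow> A \<subseteq> S \<and> {x\<in>S. lshift S x A \<in> q} \<in> p"
  unfolding uplus_def by simp

lemma lshift_S: "sg S \<Longrightarrow> x \<in> S \<Longrightarrow> lshift S x S = S"
  unfolding lshift_def using sgD by blast

lemma lshift_compl: "sg S \<Longrightarrow> x \<in> S \<Longrightarrow> lshift S x (S - A) = S - lshift S x A"
  unfolding lshift_def using sgD by blast

lemma uplus_uf:
  assumes sg: "sg S" and u: "ultrafilter_on S p" and v: "ultrafilter_on S q"
  shows "ultrafilter_on S (uplus S p q)"
  unfolding ultrafilter_on_def
proof (intro conjI ballI allI impI)
  show "uplus S p q \<subseteq> Pow S" unfolding uplus_def by blast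
  have "{x\<in>S. lshift S x S \<in> q} = S" using lshift_S[OF sg] uf_S[OF v] by auto
  then show "S \<in> uplus S p q" unfolding uplus_mem using uf_S[OF u] by simp
  have eq0: "{x\<in>S. lshift S x {} \<in> q} = {}" using uf_empty[OF v] by (simp add: lshift_def)
  show "{} \<notin> uplus S p q"
  proof
    assume "{} \<in> uplus S p q"
    then have "{x\<in>S. lshift S x {} \<in> q} \<in> p" unfolding uplus_mem by simp
    then show False using eq0 uf_empty[OF u] by metis
  qed
next
  fix A B assume A: "A \<in> uplus S p q" and B: "B \<in> uplus S p q"
  let ?DA = "{x\<in>S. lshift S x A \<in> q}" and ?DB = "{x\<in>S. lshift S x B \<in> q}"
  have DA: "?DA \<in> p" and DB: "?DB \<in> p" and AS: "A \<subseteq> S" using A B unfolding uplus_mem by simp_all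
  have I: "?DA \<inter> ?DB \<in> p" by (rule uf_int[OF u DA DB])
  have sub: "?DA \<inter> ?DB \<subseteq> {x\<in>S. lshift S x (A \<inter> B) \<in> q}"
  proof
    fix x assume "x \<in> ?DA \<inter> ?DB"
    then have x: "x \<in> S" "lshift S x A \<in> q" "lshift S x B \<in> q" by auto
    have e: "lshift S x (A \<inter> B) = lshift S x A \<inter> lshift S x B" unfolding lshift_def by auto
    show "x \<in> {x\<in>S. lshift S x (A \<inter> B) \<in> q}" using uf_int[OF v x(2) x(3)] x(1) e by simp
  qed
  have "{x\<in>S. lshift S x (A \<inter> B) \<in> q} \<in> p" by (rule uf_mono[OF u I sub]) auto
  then show "A \<inter> B \<in> uplus S p q" unfolding uplus_mem using AS by auto
next
  fix A B assume A: "A \<in> uplus S p q" and AB: "A \<subseteq> B \<and> B \<subseteq> S"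
  have DA: "{x\<in>S. lshift S x A \<in> q} \<in> p" using A unfolding uplus_mem by simp
  have sub: "{x\<in>S. lshift S x A \<in> q} \<subseteq> {x\<in>S. lshift S x B \<in> q}"
  proof
    fix x assume "x \<in> {x\<in>S. lshift S x A \<in> q}"
    then have x: "x \<in> S" "lshift S x A \<in> q" by auto
    have "lshift S x A \<subseteq> lshift S x B" using AB unfolding lshift_def by auto
    then have "lshift S x B \<in> q" by (rule uf_mono[OF v x(2) _ lshift_sub])
    then show "x \<in> {x\<in>S. lshift S x B \<in> q}" using x by simp
  qed
  have "{x\<in>S. lshift S x B \<in> q} \<in> p" by (rule uf_mono[OF u DA sub]) auto
  then show "B \<in> uplus S p q" using AB unfolding uplus_mem by simp
next
  fix A assume AS: "A \<subseteq> S"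
  let ?D = "{x\<in>S. lshift S x A \<in> q}"
  show "A \<in> uplus S p q \<or> S - A \<in> uplus S p q"
  proof (cases "?D \<in> p")
    case True then show ?thesis using AS unfolding uplus_mem by simp
  next
    case False
    have "?D \<subseteq> S" by auto
    then have c: "S - ?D \<in> p" using uf_compl[OF u, of ?D] False by simp
    have sub: "S - ?D \<subseteq> {x\<in>S. lshift S x (S - A) \<in> q}"
    proof
      fix x assume x: "x \<in> S - ?D"
      then have n: "lshift S x A \<notin> q" and xS: "x \<in> S" by auto
      have "S - lshift S x A \<in> q" using uf_compl[OF v lshift_sub, of x A] n by simp
      then show "x \<in> {x\<in>S. lshift S x (S - A) \<in> q}" using lshift_compl[OF sg xS] xS by simp
    qed
    have "{x\<in>S. lshift S x (S - A) \<in> q} \<in> p" by (rule uf_mono[OF u c sub]) auto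
    then show ?thesis unfolding uplus_mem by simp
  qed
qed

lemma uplus_assoc:
  assumes sg: "sg S"
  shows "uplus S (uplus S p q) r = uplus S p (uplus S q r)"
proof -
  have key: "{y\<in>S. lshift S y {x\<in>S. lshift S x A \<in> r} \<in> q} = {y\<in>S. lshift S y A \<in> uplus S q r}" for A
  proof -
    have eq: "lshift S y {x\<in>S. lshift S x A \<in> r} = {z\<in>S. lshift S z (lshift S y A) \<in> r}" if y: "y \<in> S" for y
    proof -
      have "lshift S (y + z) A = lshift S z (lshift S y A)" if z: "z \<in> S" for z
        unfolding lshift_def using sgD[OF sg z] by (auto simp: add.assoc)
      then show ?thesis unfolding lshift_def using sgD[OF sg y] by auto
    qed
    show ?thesis
    proof (intro Collect_cong conj_cong refl)
      fix y assume "y \<in> S"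
      show "lshift S y {x\<in>S. lshift S x A \<in> r} \<in> q \<longleftrightarrow> lshift S y A \<in> uplus S q r"
        unfolding uplus_mem eq[OF \<open>y \<in> S\<close>] using lshift_sub by blast
    qed
  qed
  show ?thesis
  proof (rule set_eqI)
    fix A
    show "A \<in> uplus S (uplus S p q) r \<longleftrightarrow> A \<in> uplus S p (uplus S q r)"
      unfolding uplus_mem[of A S "uplus S p q"] uplus_mem[of A S p] uplus_mem[of _ S p q] key by auto
  qed
qed

lemma betaS_iff: "p \<in> betaS S \<longleftrightarrow> ultrafilter_on S p"
  unfolding betaS_def by simp

lemma Oplus_iff: "p \<in> Oplus S \<longleftrightarrow> ultrafilter_on S p \<and> (\<forall>e>0. S \<inter> {0<..<e} \<in> p)"
  unfolding Oplus_def betaS_def by simp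

lemma Oplus_uplus:
  assumes sg: "sg S" and pos: "S \<subseteq> {0<..}" and p: "p \<in> Oplus S" and q: "q \<in> Oplus S"
  shows "uplus S p q \<in> Oplus S"
  unfolding Oplus_iff
proof (intro conjI allI impI)
  have u: "ultrafilter_on S p" and v: "ultrafilter_on S q" using p q Oplus_iff by auto
  show "ultrafilter_on S (uplus S p q)" by (rule uplus_uf[OF sg u v])
  fix e :: real assume e: "e > 0"
  have h: "S \<inter> {0<..<e/2} \<in> p" "S \<inter> {0<..<e/2} \<in> q" using p q e Oplus_iff by auto
  have "S \<inter> {0<..<e/2} \<subseteq> {x\<in>S. lshift S x (S \<inter> {0<..<e}) \<in> q}"
  proof
    fix x assume x: "x \<in> S \<inter> {0<..<e/2}"
    have "S \<inter> {0<..<e/2} \<subseteq> lshift S x (S \<inter> {0<..<e})"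
      unfolding lshift_def using x pos sgD[OF sg] by auto
    then have "lshift S x (S \<inter> {0<..<e}) \<in> q" using uf_mono[OF v h(2) _ lshift_sub] by blast
    then show "x \<in> {x\<in>S. lshift S x (S \<inter> {0<..<e}) \<in> q}" using x by blast
  qed
  then have "{x\<in>S. lshift S x (S \<inter> {0<..<e}) \<in> q} \<in> p" using uf_mono[OF u h(1)] by blast
  then show "S \<inter> {0<..<e} \<in> uplus S p q" unfolding uplus_mem by blast
qed


lemma plim_unique:
  fixes f :: "real \<Rightarrow> 'a::t2_space"
  assumes u: "ultrafilter_on S p" and h: "\<forall>W. open W \<and> z \<in> W \<longrightarrow> {s\<in>S. f s \<in> W} \<in> p"
  shows "plim S p f = z"
  unfolding plim_def
proof (rule the_equality)
  show "\<forall>W. open W \<and> z \<in> W \<longrightarrow> {s\<in>S. f s \<in> W} \<in> p" by (rule h)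
  fix z' assume h': "\<forall>W. open W \<and> z' \<in> W \<longrightarrow> {s\<in>S. f s \<in> W} \<in> p"
  show "z' = z"
  proof (rule ccontr)
    assume ne: "z' \<noteq> z"
    obtain U V where UV: "open U" "open V" "z' \<in> U" "z \<in> V" "U \<inter> V = {}"
      using hausdorff[OF ne] by auto
    have 1: "{s\<in>S. f s \<in> U} \<in> p" using h' UV(1,3) by simp
    have 2: "{s\<in>S. f s \<in> V} \<in> p" using h UV(2,4) by simp
    have "{s\<in>S. f s \<in> U} \<inter> {s\<in>S. f s \<in> V} \<in> p" by (rule uf_int[OF u 1 2])
    moreover have "{s\<in>S. f s \<in> U} \<inter> {s\<in>S. f s \<in> V} = {}" using UV(5) by auto
    ultimately show False using uf_empty[OF u] by simp
  qed
qed

lemma plim_exists: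
  fixes f :: "real \<Rightarrow> 'a::t2_space"
  assumes u: "ultrafilter_on S p" and X: "compact X" and fX: "\<forall>s\<in>S. f s \<in> X"
  shows "\<exists>z\<in>X. \<forall>W. open W \<and> z \<in> W \<longrightarrow> {s\<in>S. f s \<in> W} \<in> p"
proof (rule ccontr)
  assume nt: "\<not> ?thesis"
  define Tc where "Tc = {W. open W \<and> {s\<in>S. f s \<in> W} \<notin> p}"
  have cov: "X \<subseteq> \<Union>Tc"
  proof
    fix z assume z: "z \<in> X"
    then obtain W where W: "open W" "z \<in> W" "{s\<in>S. f s \<in> W} \<notin> p" using nt by auto
    then have "W \<in> Tc" unfolding Tc_def by simp
    then show "z \<in> \<Union>Tc" using W(2) by (rule UnionI)
  qed
  have op: "\<And>B. B \<in> Tc \<Longrightarrow> open B" unfolding Tc_def by simp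
  obtain T' where T': "T' \<subseteq> Tc" "finite T'" "X \<subseteq> \<Union>T'"
    using compactE[OF X cov op] by metis
  define F where "F = (\<lambda>W. {s\<in>S. f s \<in> W}) ` T'"
  have fin: "finite F" using T'(2) unfolding F_def by simp
  have subS: "\<forall>A\<in>F. A \<subseteq> S" unfolding F_def by auto
  have "S \<subseteq> \<Union>F"
  proof
    fix s assume s: "s \<in> S"
    then have "f s \<in> \<Union>T'" using fX T'(3) by auto
    then obtain W where W: "W \<in> T'" "f s \<in> W" by auto
    then have "{s\<in>S. f s \<in> W} \<in> F" unfolding F_def by simp
    moreover have "s \<in> {s\<in>S. f s \<in> W}" using s W(2) by simp
    ultimately show "s \<in> \<Union>F" by (rule UnionI)
  qed
  then have "\<Union>F = S" using subS by auto
  then have "\<Union>F \<in> p" using uf_S[OF u] by simp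
  then obtain A where A: "A \<in> F" "A \<in> p" using uf_finite_union[OF u fin subS] by auto
  then obtain W where W: "W \<in> T'" "A = {s\<in>S. f s \<in> W}" unfolding F_def by auto
  then have "W \<in> Tc" using T'(1) by auto
  then have "A \<notin> p" using W(2) unfolding Tc_def by simp
  then show False using A(2) by simp
qed

lemma plim_prop:
  fixes f :: "real \<Rightarrow> 'a::t2_space"
  assumes u: "ultrafilter_on S p" and X: "compact X" and fX: "\<forall>s\<in>S. f s \<in> X"
  shows "plim S p f \<in> X" "\<And>W. open W \<Longrightarrow> plim S p f \<in> W \<Longrightarrow> {s\<in>S. f s \<in> W} \<in> p"
proof -
  obtain z where z: "z \<in> X" "\<forall>W. open W \<and> z \<in> W \<longrightarrow> {s\<in>S. f s \<in> W} \<in> p"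
    using plim_exists[OF u X fX] by blast
  have e: "plim S p f = z" by (rule plim_unique[OF u z(2)])
  show "plim S p f \<in> X" using e z by simp
  show "\<And>W. open W \<Longrightarrow> plim S p f \<in> W \<Longrightarrow> {s\<in>S. f s \<in> W} \<in> p" using e z by simp
qed

lemma ds_facts:
  assumes "dynamical_system S X T"
  shows "compact X" "\<And>s. s \<in> S \<Longrightarrow> continuous_on X (T s)" "\<And>s y. s \<in> S \<Longrightarrow> y \<in> X \<Longrightarrow> T s y \<in> X"
    "\<And>s t y. s \<in> S \<Longrightarrow> t \<in> S \<Longrightarrow> y \<in> X \<Longrightarrow> T s (T t y) = T (s + t) y"
  using assms unfolding dynamical_system_def by auto

lemma Tp_prop:
  fixes T :: "real \<Rightarrow> 'a::t2_space \<Rightarrow> 'a"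
  assumes ds: "dynamical_system S X T" and u: "ultrafilter_on S p" and x: "x \<in> X"
  shows "Tp S T p x \<in> X" "\<And>W. open W \<Longrightarrow> Tp S T p x \<in> W \<Longrightarrow> {s\<in>S. T s x \<in> W} \<in> p"
proof -
  have fX: "\<forall>s\<in>S. T s x \<in> X" using ds_facts(3)[OF ds _ x] by blast
  show "Tp S T p x \<in> X" unfolding Tp_def by (rule plim_prop(1)[OF u ds_facts(1)[OF ds] fX])
  show "\<And>W. open W \<Longrightarrow> Tp S T p x \<in> W \<Longrightarrow> {s\<in>S. T s x \<in> W} \<in> p"
    unfolding Tp_def by (rule plim_prop(2)[OF u ds_facts(1)[OF ds] fX])
qed

lemma Tp_unique:
  fixes T :: "real \<Rightarrow> 'a::t2_space \<Rightarrow> 'a"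
  assumes u: "ultrafilter_on S p" and h: "\<And>W. open W \<Longrightarrow> z \<in> W \<Longrightarrow> {s\<in>S. T s x \<in> W} \<in> p"
  shows "Tp S T p x = z"
  unfolding Tp_def by (rule plim_unique[OF u]) (use h in blast)

lemma Tp_comp:
  fixes T :: "real \<Rightarrow> 'a::t2_space \<Rightarrow> 'a"
  assumes ds: "dynamical_system S X T" and sg: "sg S" and u: "ultrafilter_on S p" and v: "ultrafilter_on S q"
    and x: "x \<in> X"
  shows "Tp S T (uplus S p q) x = Tp S T p (Tp S T q x)"
proof (rule Tp_unique[OF uplus_uf[OF sg u v]])
  let ?y = "Tp S T q x"
  have y: "?y \<in> X" by (rule Tp_prop(1)[OF ds v x])
  fix W :: "'a set" assume W: "open W" and zW: "Tp S T p ?y \<in> W"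
  have P: "{s\<in>S. T s ?y \<in> W} \<in> p" by (rule Tp_prop(2)[OF ds u y W zW])
  have sub: "{s\<in>S. T s ?y \<in> W} \<subseteq> {s\<in>S. lshift S s {s\<in>S. T s x \<in> W} \<in> q}"
  proof
    fix s assume "s \<in> {s\<in>S. T s ?y \<in> W}"
    then have s: "s \<in> S" and sy: "T s ?y \<in> W" by auto
    have "continuous_on X (T s)" by (rule ds_facts(2)[OF ds s])
    then obtain A where A: "open A" "A \<inter> X = T s -` W \<inter> X"
      using W unfolding continuous_on_open_invariant by blast
    have yA: "?y \<in> A" using A(2) y sy by blast
    have Q: "{r\<in>S. T r x \<in> A} \<in> q" by (rule Tp_prop(2)[OF ds v x A(1) yA])
    have sub2: "{r\<in>S. T r x \<in> A} \<subseteq> lshift S s {s\<in>S. T s x \<in> W}"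
    proof
      fix r assume "r \<in> {r\<in>S. T r x \<in> A}"
      then have r: "r \<in> S" "T r x \<in> A" by auto
      have rX: "T r x \<in> X" by (rule ds_facts(3)[OF ds r(1) x])
      have "T s (T r x) \<in> W" using A(2) r(2) rX by blast
      then have "T (s + r) x \<in> W" using ds_facts(4)[OF ds s r(1) x] by simp
      then show "r \<in> lshift S s {s\<in>S. T s x \<in> W}" unfolding lshift_def using sgD[OF sg s r(1)] r(1) by simp
    qed
    have "lshift S s {s\<in>S. T s x \<in> W} \<in> q" by (rule uf_mono[OF v Q sub2 lshift_sub])
    then show "s \<in> {s\<in>S. lshift S s {s\<in>S. T s x \<in> W} \<in> q}" using s by simp
  qed
  have "{s\<in>S. lshift S s {s\<in>S. T s x \<in> W} \<in> q} \<in> p" by (rule uf_mono[OF u P sub]) auto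
  then show "{s\<in>S. T s x \<in> W} \<in> uplus S p q" unfolding uplus_mem by auto
qed


definition bclosed :: "real set \<Rightarrow> real set set set \<Rightarrow> bool" where
  "bclosed S M \<longleftrightarrow> M \<subseteq> betaS S \<and>
     (\<forall>p. ultrafilter_on S p \<and> (\<forall>A\<in>p. \<exists>q\<in>M. A \<in> q) \<longrightarrow> p \<in> M)"

lemma bclosedD: "bclosed S M \<Longrightarrow> ultrafilter_on S p \<Longrightarrow> (\<And>A. A \<in> p \<Longrightarrow> \<exists>q\<in>M. A \<in> q) \<Longrightarrow> p \<in> M"
  unfolding bclosed_def by blast

lemma bclosed_uf: "bclosed S M \<Longrightarrow> q \<in> M \<Longrightarrow> ultrafilter_on S q"
  unfolding bclosed_def betaS_def by blast

lemma bclosedI: "(\<And>q. q \<in> M \<Longrightarrow> ultrafilter_on S q) \<Longrightarrow>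
   (\<And>p. ultrafilter_on S p \<Longrightarrow> (\<And>A. A \<in> p \<Longrightarrow> \<exists>q\<in>M. A \<in> q) \<Longrightarrow> p \<in> M) \<Longrightarrow> bclosed S M"
  unfolding bclosed_def betaS_def by blast

lemma bclosed_Int: "bclosed S M1 \<Longrightarrow> bclosed S M2 \<Longrightarrow> bclosed S (M1 \<inter> M2)"
proof (rule bclosedI)
  assume c1: "bclosed S M1" and c2: "bclosed S M2"
  show "\<And>q. q \<in> M1 \<inter> M2 \<Longrightarrow> ultrafilter_on S q" using bclosed_uf[OF c1] by blast
  fix p assume u: "ultrafilter_on S p" and h: "\<And>A. A \<in> p \<Longrightarrow> \<exists>q\<in>M1 \<inter> M2. A \<in> q"
  have "p \<in> M1" by (rule bclosedD[OF c1 u]) (use h in blast)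
  moreover have "p \<in> M2" by (rule bclosedD[OF c2 u]) (use h in blast)
  ultimately show "p \<in> M1 \<inter> M2" by simp
qed

lemma bclosed_mem: "bclosed S N \<Longrightarrow> B \<subseteq> S \<Longrightarrow> bclosed S (N \<inter> {q. B \<in> q})"
proof (rule bclosedI)
  assume c: "bclosed S N" and BS: "B \<subseteq> S"
  show "\<And>q. q \<in> N \<inter> {q. B \<in> q} \<Longrightarrow> ultrafilter_on S q" using bclosed_uf[OF c] by blast
  fix p assume u: "ultrafilter_on S p" and h: "\<And>A. A \<in> p \<Longrightarrow> \<exists>q\<in>N \<inter> {q. B \<in> q}. A \<in> q"
  have "p \<in> N" by (rule bclosedD[OF c u]) (use h in blast)
  moreover have "B \<in> p"
  proof (rule ccontr)
    assume "B \<notin> p"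
    then have "S - B \<in> p" using uf_compl[OF u BS] by simp
    then obtain q where q: "q \<in> N" "B \<in> q" "S - B \<in> q" using h by blast
    then show False using uf_not_both[OF bclosed_uf[OF c q(1)] q(2)] by simp
  qed
  ultimately show "p \<in> N \<inter> {q. B \<in> q}" by simp
qed

lemma compact_directed:
  assumes ne: "NN \<noteq> {}" and cl: "\<And>N. N \<in> NN \<Longrightarrow> bclosed S N" and nE: "\<And>N. N \<in> NN \<Longrightarrow> N \<noteq> {}"
    and dir: "\<And>N1 N2. N1 \<in> NN \<Longrightarrow> N2 \<in> NN \<Longrightarrow> \<exists>N3\<in>NN. N3 \<subseteq> N1 \<inter> N2"
  shows "\<exists>p. \<forall>N\<in>NN. p \<in> N"
proof -
  define F where "F = {A. A \<subseteq> S \<and> (\<exists>N\<in>NN. \<forall>q\<in>N. A \<in> q)}"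
  have FS: "F \<subseteq> Pow S" unfolding F_def by blast
  have base: "\<exists>N\<in>NN. \<forall>q\<in>N. S \<inter> \<Inter>G \<in> q" if "finite G" "G \<subseteq> F" for G
    using that
  proof (induction G rule: finite_induct)
    case empty
    obtain N where N: "N \<in> NN" using ne by blast
    have "\<forall>q\<in>N. S \<in> q" using bclosed_uf[OF cl[OF N]] uf_S by blast
    then show ?case using N by auto
  next
    case (insert A G)
    obtain N2 where N2: "N2 \<in> NN" "\<forall>q\<in>N2. S \<inter> \<Inter>G \<in> q" using insert by blast
    have "A \<in> F" using insert.prems by simp
    then obtain N1 where N1: "N1 \<in> NN" "\<forall>q\<in>N1. A \<in> q" unfolding F_def by blast
    obtain N3 where N3: "N3 \<in> NN" "N3 \<subseteq> N1 \<inter> N2" using dir[OF N1(1) N2(1)] by blast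
    have "\<forall>q\<in>N3. S \<inter> \<Inter>(insert A G) \<in> q"
    proof
      fix q assume q: "q \<in> N3"
      have uq: "ultrafilter_on S q" using bclosed_uf[OF cl[OF N3(1)] q] .
      have "A \<inter> (S \<inter> \<Inter>G) \<in> q" using uf_int[OF uq] N1(2) N2(2) N3(2) q by blast
      moreover have "A \<inter> (S \<inter> \<Inter>G) = S \<inter> \<Inter>(insert A G)" by auto
      ultimately show "S \<inter> \<Inter>(insert A G) \<in> q" by simp
    qed
    then show ?case using N3(1) by blast
  qed
  have "fip S F" unfolding fip_def
  proof (intro allI impI)
    fix G assume G: "finite G \<and> G \<subseteq> F"
    then obtain N where N: "N \<in> NN" "\<forall>q\<in>N. S \<inter> \<Inter>G \<in> q" using base by blast
    obtain q where q: "q \<in> N" using nE[OF N(1)] by blast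
    show "S \<inter> \<Inter>G \<noteq> {}" using uf_ne[OF bclosed_uf[OF cl[OF N(1)] q]] N(2) q by blast
  qed
  then obtain p where p: "ultrafilter_on S p" "F \<subseteq> p" using ultrafilter_exists[OF FS] by blast
  have "p \<in> N" if N: "N \<in> NN" for N
  proof (rule bclosedD[OF cl[OF N] p(1)])
    fix A assume A: "A \<in> p"
    show "\<exists>q\<in>N. A \<in> q"
    proof (rule ccontr)
      assume "\<not> (\<exists>q\<in>N. A \<in> q)"
      then have "\<forall>q\<in>N. S - A \<in> q" using uf_compl[OF bclosed_uf[OF cl[OF N]] uf_sub[OF p(1) A]] by blast
      then have "S - A \<in> F" unfolding F_def using N by blast
      then have "S - A \<in> p" using p(2) by blast
      then show False using uf_not_both[OF p(1) A] by simp
    qed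
  qed
  then show ?thesis by blast
qed

lemma bclosed_rimage:
  assumes sg: "sg S" and c: "bclosed S N" and e: "ultrafilter_on S e"
  shows "bclosed S ((\<lambda>q. uplus S q e) ` N)"
proof (rule bclosedI)
  fix w assume "w \<in> (\<lambda>q. uplus S q e) ` N"
  then obtain q where q: "q \<in> N" "w = uplus S q e" by auto
  show "ultrafilter_on S w" using uplus_uf[OF sg bclosed_uf[OF c q(1)] e] q(2) by simp
next
  fix p assume u: "ultrafilter_on S p" and h: "\<And>A. A \<in> p \<Longrightarrow> \<exists>q\<in>(\<lambda>q. uplus S q e) ` N. A \<in> q"
  define D where "D = (\<lambda>A. {s\<in>S. lshift S s A \<in> e})"
  have DS: "D B \<subseteq> S" for B unfolding D_def by auto
  define NN where "NN = (\<lambda>A. N \<inter> {q. D A \<in> q}) ` p"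
  have "\<exists>q. \<forall>M\<in>NN. q \<in> M"
  proof (rule compact_directed)
    show "NN \<noteq> {}" unfolding NN_def using uf_S[OF u] by auto
    fix M assume "M \<in> NN"
    then obtain A where A: "A \<in> p" "M = N \<inter> {q. D A \<in> q}" unfolding NN_def by auto
    show "bclosed S M" using bclosed_mem[OF c DS] A(2) by simp
    obtain w where w: "w \<in> (\<lambda>q. uplus S q e) ` N" "A \<in> w" using h[OF A(1)] by auto
    then obtain q where q: "q \<in> N" "A \<in> uplus S q e" by auto
    have "D A \<in> q" using q(2) unfolding uplus_mem D_def by simp
    then show "M \<noteq> {}" using A(2) q(1) by auto
  next
    fix M1 M2 assume M1: "M1 \<in> NN" and M2: "M2 \<in> NN"
    obtain A1 where A1: "A1 \<in> p" "M1 = N \<inter> {q. D A1 \<in> q}" using M1 unfolding NN_def by auto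
    obtain A2 where A2: "A2 \<in> p" "M2 = N \<inter> {q. D A2 \<in> q}" using M2 unfolding NN_def by auto
    have A12: "A1 \<inter> A2 \<in> p" using uf_int[OF u A1(1) A2(1)] .
    have m: "D (A1 \<inter> A2) \<subseteq> D B" if "B = A1 \<or> B = A2" for B
    proof
      fix s assume "s \<in> D (A1 \<inter> A2)"
      then have s: "s \<in> S" "lshift S s (A1 \<inter> A2) \<in> e" unfolding D_def by auto
      have "lshift S s (A1 \<inter> A2) \<subseteq> lshift S s B" using that unfolding lshift_def by auto
      then have "lshift S s B \<in> e" by (rule uf_mono[OF e s(2) _ lshift_sub])
      then show "s \<in> D B" unfolding D_def using s(1) by simp
    qed
    have sub: "N \<inter> {q. D (A1 \<inter> A2) \<in> q} \<subseteq> M1 \<inter> M2"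
    proof
      fix q assume q: "q \<in> N \<inter> {q. D (A1 \<inter> A2) \<in> q}"
      then have qN: "q \<in> N" and dq: "D (A1 \<inter> A2) \<in> q" by auto
      have uq: "ultrafilter_on S q" by (rule bclosed_uf[OF c qN])
      have "D A1 \<in> q" by (rule uf_mono[OF uq dq m DS]) simp
      moreover have "D A2 \<in> q" by (rule uf_mono[OF uq dq m DS]) simp
      ultimately show "q \<in> M1 \<inter> M2" using A1(2) A2(2) qN by simp
    qed
    have "N \<inter> {q. D (A1 \<inter> A2) \<in> q} \<in> NN" unfolding NN_def using A12 by (rule imageI)
    then show "\<exists>N3\<in>NN. N3 \<subseteq> M1 \<inter> M2" using sub by auto
  qed
  then obtain q where q0: "\<forall>M\<in>NN. q \<in> M" by auto
  have q: "q \<in> N \<and> D A \<in> q" if "A \<in> p" for A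
  proof -
    have "N \<inter> {q. D A \<in> q} \<in> NN" unfolding NN_def using that by (rule imageI)
    then show ?thesis using q0 by auto
  qed
  have qN: "q \<in> N" using q[OF uf_S[OF u]] by simp
  have uq: "ultrafilter_on S q" using bclosed_uf[OF c qN] .
  have "p \<subseteq> uplus S q e"
  proof
    fix A assume A: "A \<in> p"
    have "D A \<in> q" using q[OF A] by simp
    then show "A \<in> uplus S q e" unfolding uplus_mem D_def using uf_sub[OF u A] by simp
  qed
  then have "p = uplus S q e" using uf_eq[OF u uplus_uf[OF sg uq e]] by simp
  then show "p \<in> (\<lambda>q. uplus S q e) ` N" using qN by simp
qed


lemma ellis:
  assumes sg: "sg S" and c: "bclosed S M" and ne: "M \<noteq> {}"
    and smg: "\<And>p q. p \<in> M \<Longrightarrow> q \<in> M \<Longrightarrow> uplus S p q \<in> M"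
  shows "\<exists>e\<in>M. uplus S e e = e"
proof -
  define AA where "AA = {N. N \<subseteq> M \<and> N \<noteq> {} \<and> bclosed S N \<and> (\<forall>p\<in>N. \<forall>q\<in>N. uplus S p q \<in> N)}"
  have MA: "M \<in> AA" unfolding AA_def using c ne smg by auto
  have po: "partial_order_on AA (relation_of (\<lambda>a b. b \<subseteq> a) AA)"
    unfolding partial_order_on_def preorder_on_def refl_on_def trans_on_def antisym_on_def relation_of_def
    by auto
  have "\<exists>m\<in>AA. \<forall>a\<in>AA. m \<supseteq> a \<longrightarrow> a = m"
  proof (rule predicate_Zorn[OF po])
    fix C assume C: "C \<in> Chains (relation_of (\<lambda>a b. b \<subseteq> a) AA)"
    have CA: "C \<subseteq> AA" using Chains_relation_of[OF C] .
    have tot: "\<And>a b. a \<in> C \<Longrightarrow> b \<in> C \<Longrightarrow> a \<subseteq> b \<or> b \<subseteq> a"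
      using C unfolding Chains_def relation_of_def by blast
    show "\<exists>u\<in>AA. \<forall>a\<in>C. u \<subseteq> a"
    proof (cases "C = {}")
      case True then show ?thesis using MA by blast
    next
      case False
      have inA: "\<And>N. N \<in> C \<Longrightarrow> N \<subseteq> M \<and> N \<noteq> {} \<and> bclosed S N \<and> (\<forall>p\<in>N. \<forall>q\<in>N. uplus S p q \<in> N)"
        using CA unfolding AA_def by blast
      have "\<exists>p. \<forall>N\<in>C. p \<in> N"
      proof (rule compact_directed[OF False])
        show "\<And>N. N \<in> C \<Longrightarrow> bclosed S N" using inA by blast
        show "\<And>N. N \<in> C \<Longrightarrow> N \<noteq> {}" using inA by blast
        fix N1 N2 assume "N1 \<in> C" "N2 \<in> C"
        then show "\<exists>N3\<in>C. N3 \<subseteq> N1 \<inter> N2" using tot[of N1 N2] by (metis inf.absorb_iff2 inf.absorb_iff1 order_refl)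
      qed
      then have nE: "\<Inter>C \<noteq> {}" by blast
      have "\<Inter>C \<in> AA" unfolding AA_def
      proof (intro CollectI conjI ballI)
        obtain N where N: "N \<in> C" using False by blast
        show "\<Inter>C \<subseteq> M" using inA[OF N] N by blast
        show "\<Inter>C \<noteq> {}" by (rule nE)
        show "bclosed S (\<Inter>C)"
        proof (rule bclosedI)
          show "\<And>q. q \<in> \<Inter>C \<Longrightarrow> ultrafilter_on S q" using N inA bclosed_uf by blast
          fix p assume u: "ultrafilter_on S p" and h: "\<And>A. A \<in> p \<Longrightarrow> \<exists>q\<in>\<Inter>C. A \<in> q"
          show "p \<in> \<Inter>C"
          proof
            fix N' assume N': "N' \<in> C"
            show "p \<in> N'"
            proof (rule bclosedD[OF _ u])
              show "bclosed S N'" using inA[OF N'] by blast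
              fix A assume "A \<in> p"
              then obtain q where "q \<in> \<Inter>C" "A \<in> q" using h by blast
              then show "\<exists>q\<in>N'. A \<in> q" using N' by blast
            qed
          qed
        qed
        fix p q assume "p \<in> \<Inter>C" "q \<in> \<Inter>C"
        then show "uplus S p q \<in> \<Inter>C" using inA by blast
      qed
      then show ?thesis by blast
    qed
  qed
  then obtain N where NA: "N \<in> AA" and mini: "\<And>N'. N' \<in> AA \<Longrightarrow> N' \<subseteq> N \<Longrightarrow> N' = N" by blast
  have NM: "N \<subseteq> M" and Nne: "N \<noteq> {}" and Nc: "bclosed S N"
    and Ns: "\<And>p q. p \<in> N \<Longrightarrow> q \<in> N \<Longrightarrow> uplus S p q \<in> N"
    using NA unfolding AA_def by auto
  obtain e where eN: "e \<in> N" using Nne by blast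
  have ue: "ultrafilter_on S e" using bclosed_uf[OF Nc eN] .
  have uN: "\<And>q. q \<in> N \<Longrightarrow> ultrafilter_on S q" using bclosed_uf[OF Nc] .
  define N1 where "N1 = (\<lambda>q. uplus S q e) ` N"
  have "N1 \<in> AA" unfolding AA_def
  proof (intro CollectI conjI ballI)
    show "N1 \<subseteq> M" unfolding N1_def using Ns eN NM by blast
    show "N1 \<noteq> {}" unfolding N1_def using Nne by simp
    show "bclosed S N1" unfolding N1_def by (rule bclosed_rimage[OF sg Nc ue])
    fix a b assume a: "a \<in> N1" and b: "b \<in> N1"
    obtain q1 where q1: "q1 \<in> N" "a = uplus S q1 e" using a unfolding N1_def by auto
    obtain q2 where q2: "q2 \<in> N" "b = uplus S q2 e" using b unfolding N1_def by auto
    have "uplus S a b = uplus S (uplus S (uplus S q1 e) q2) e"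
      using q1(2) q2(2) uplus_assoc[OF sg] by simp
    moreover have "uplus S (uplus S q1 e) q2 \<in> N" using Ns q1(1) q2(1) eN by blast
    ultimately show "uplus S a b \<in> N1" unfolding N1_def by simp
  qed
  moreover have "N1 \<subseteq> N" unfolding N1_def using Ns eN by blast
  ultimately have "N1 = N" by (rule mini)
  then have "e \<in> N1" using eN by simp
  then obtain q0 where q0: "q0 \<in> N" "uplus S q0 e = e" unfolding N1_def by auto
  define N2 where "N2 = {q\<in>N. uplus S q e = e}"
  have "N2 \<in> AA" unfolding AA_def
  proof (intro CollectI conjI ballI)
    show "N2 \<subseteq> M" unfolding N2_def using NM by blast
    show "N2 \<noteq> {}" unfolding N2_def using q0 by blast
    show "bclosed S N2"
    proof (rule bclosedI)
      show "\<And>q. q \<in> N2 \<Longrightarrow> ultrafilter_on S q" unfolding N2_def using uN by blast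
      fix p assume u: "ultrafilter_on S p" and h: "\<And>A. A \<in> p \<Longrightarrow> \<exists>q\<in>N2. A \<in> q"
      have pN: "p \<in> N"
      proof (rule bclosedD[OF Nc u])
        fix A assume "A \<in> p"
        then obtain q where "q \<in> N2" "A \<in> q" using h by blast
        then show "\<exists>q\<in>N. A \<in> q" unfolding N2_def by blast
      qed
      have "e \<subseteq> uplus S p e"
      proof
        fix B assume B: "B \<in> e"
        let ?D = "{s\<in>S. lshift S s B \<in> e}"
        have "?D \<in> p"
        proof (rule ccontr)
          assume "?D \<notin> p"
          then have "S - ?D \<in> p" using uf_compl[OF u, of ?D] by auto
          then obtain q where q: "q \<in> N2" "S - ?D \<in> q" using h by blast
          then have qN: "q \<in> N" and qe: "uplus S q e = e" unfolding N2_def by auto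
          have "B \<in> uplus S q e" using qe B by simp
          then have "?D \<in> q" unfolding uplus_mem by simp
          then show False using uf_not_both[OF uN[OF qN]] q(2) by blast
        qed
        then show "B \<in> uplus S p e" unfolding uplus_mem using uf_sub[OF ue B] by simp
      qed
      then have "e = uplus S p e" by (rule uf_eq[OF ue uplus_uf[OF sg u ue]])
      then show "p \<in> N2" unfolding N2_def using pN by simp
    qed
    fix a b assume a: "a \<in> N2" and b: "b \<in> N2"
    then have aN: "a \<in> N" and bN: "b \<in> N" and ae: "uplus S a e = e" and be: "uplus S b e = e"
      unfolding N2_def by auto
    have "uplus S (uplus S a b) e = uplus S a (uplus S b e)" by (rule uplus_assoc[OF sg])
    also have "\<dots> = e" using ae be by simp
    finally show "uplus S a b \<in> N2" unfolding N2_def using Ns[OF aN bN] by simp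
  qed
  moreover have "N2 \<subseteq> N" unfolding N2_def by blast
  ultimately have "N2 = N" by (rule mini)
  then have "e \<in> N2" using eN by simp
  then have "uplus S e e = e" unfolding N2_def by simp
  then show ?thesis using eN NM by blast
qed


lemma sep_compact_point:
  fixes K :: "'a::t2_space set"
  assumes K: "compact K" and x: "x \<notin> K"
  shows "\<exists>U V. open U \<and> open V \<and> x \<in> U \<and> K \<subseteq> V \<and> U \<inter> V = {}"
proof -
  let ?C = "{u. open u \<and> eventually (\<lambda>y. y \<notin> u) (nhds x)}"
  have "K \<subseteq> \<Union>?C"
  proof
    fix k assume k: "k \<in> K"
    with x have "k \<noteq> x" by auto
    then have "\<exists>u v. open u \<and> open v \<and> k \<in> u \<and> x \<in> v \<and> u \<inter> v = {}"
      by (rule hausdorff)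
    then show "k \<in> \<Union>?C" unfolding eventually_nhds by auto
  qed
  then obtain D where D: "D \<subseteq> ?C" "finite D" "K \<subseteq> \<Union>D"
    by (rule compactE [OF K]) auto
  from D(1) have "\<forall>u\<in>D. eventually (\<lambda>y. y \<notin> u) (nhds x)" by auto
  with D(2) have "eventually (\<lambda>y. y \<notin> \<Union>D) (nhds x)"
    by (simp add: eventually_ball_finite)
  then obtain U where U: "open U" "x \<in> U" "\<forall>y\<in>U. y \<notin> \<Union>D" unfolding eventually_nhds by auto
  have "open (\<Union>D)" using D(1) by auto
  moreover have "U \<inter> \<Union>D = {}" using U(3) by auto
  ultimately show ?thesis using U(1,2) D(3) by blast
qed

lemma fip_directed:
  assumes FS: "F \<subseteq> Pow S" and ne: "F \<noteq> {}" and nE: "\<And>A. A \<in> F \<Longrightarrow> A \<noteq> {}"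
    and dir: "\<And>A B. A \<in> F \<Longrightarrow> B \<in> F \<Longrightarrow> \<exists>C\<in>F. C \<subseteq> A \<inter> B"
  shows "fip S F"
proof -
  have base: "\<exists>C\<in>F. C \<subseteq> \<Inter>G" if "finite G" "G \<subseteq> F" for G
    using that
  proof (induction G rule: finite_induct)
    case empty then show ?case using ne by auto
  next
    case (insert A G)
    then obtain C where C: "C \<in> F" "C \<subseteq> \<Inter>G" by auto
    have "A \<in> F" using insert.prems by simp
    then obtain C' where C': "C' \<in> F" "C' \<subseteq> A \<inter> C" using dir C(1) by blast
    then show ?case using C(2) by auto
  qed
  show ?thesis unfolding fip_def
  proof (intro allI impI)
    fix G assume "finite G \<and> G \<subseteq> F"
    then obtain C where C: "C \<in> F" "C \<subseteq> \<Inter>G" using base by blast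
    have "C \<subseteq> S" using C(1) FS by auto
    then have "C \<subseteq> S \<inter> \<Inter>G" using C(2) by blast
    then show "S \<inter> \<Inter>G \<noteq> {}" using nE[OF C(1)] by blast
  qed
qed

lemma lshift_lshift:
  assumes sg: "sg S" and s: "s \<in> S" and t: "t \<in> S"
  shows "lshift S s (lshift S t C) = lshift S (t + s) C"
  unfolding lshift_def using sgD[OF sg s] sgD[OF sg t] by (auto simp: add.assoc)

lemma lshift_mono: "A \<subseteq> B \<Longrightarrow> lshift S t A \<subseteq> lshift S t B"
  unfolding lshift_def by auto

lemma shift_lemma:
  fixes T :: "real \<Rightarrow> 'a::t2_space \<Rightarrow> 'a"
  assumes ds: "dynamical_system S X T" and sg: "sg S" and v: "ultrafilter_on S w" and x: "x \<in> X"
    and t: "t \<in> S" and V: "open V" and tV: "T t (Tp S T w x) \<in> V"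
  shows "lshift S t {s\<in>S. T s x \<in> V} \<in> w"
proof -
  let ?y = "Tp S T w x"
  have y: "?y \<in> X" by (rule Tp_prop(1)[OF ds v x])
  have "continuous_on X (T t)" by (rule ds_facts(2)[OF ds t])
  then obtain A where A: "open A" "A \<inter> X = T t -` V \<inter> X"
    using V unfolding continuous_on_open_invariant by blast
  have yA: "?y \<in> A" using A(2) y tV by blast
  have Q: "{r\<in>S. T r x \<in> A} \<in> w" by (rule Tp_prop(2)[OF ds v x A(1) yA])
  have sub2: "{r\<in>S. T r x \<in> A} \<subseteq> lshift S t {s\<in>S. T s x \<in> V}"
  proof
    fix r assume "r \<in> {r\<in>S. T r x \<in> A}"
    then have r: "r \<in> S" "T r x \<in> A" by auto
    have rX: "T r x \<in> X" by (rule ds_facts(3)[OF ds r(1) x])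
    have "T t (T r x) \<in> V" using A(2) r(2) rX by blast
    then have "T (t + r) x \<in> V" using ds_facts(4)[OF ds t r(1) x] by simp
    then show "r \<in> lshift S t {s\<in>S. T s x \<in> V}" unfolding lshift_def using sgD[OF sg t r(1)] r(1) by simp
  qed
  show ?thesis by (rule uf_mono[OF v Q sub2 lshift_sub])
qed

lemma Oplus_bclosed: "bclosed S (Oplus S)"
proof (rule bclosedI)
  show "\<And>q. q \<in> Oplus S \<Longrightarrow> ultrafilter_on S q" using Oplus_iff by blast
  fix p assume u: "ultrafilter_on S p" and h: "\<And>A. A \<in> p \<Longrightarrow> \<exists>q\<in>Oplus S. A \<in> q"
  have "S \<inter> {0<..<e} \<in> p" if e: "e > 0" for e :: real
  proof (rule ccontr)
    assume "S \<inter> {0<..<e} \<notin> p"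
    then have "S - S \<inter> {0<..<e} \<in> p" using uf_compl[OF u, of "S \<inter> {0<..<e}"] by auto
    then obtain q where q: "q \<in> Oplus S" "S - S \<inter> {0<..<e} \<in> q" using h by blast
    have uq: "ultrafilter_on S q" and "S \<inter> {0<..<e} \<in> q" using q(1) e Oplus_iff by auto
    then show False using uf_not_both[OF uq] q(2) by blast
  qed
  then show "p \<in> Oplus S" using u Oplus_iff by blast
qed

lemma fix_bclosed:
  fixes T :: "real \<Rightarrow> 'a::t2_space \<Rightarrow> 'a"
  assumes ds: "dynamical_system S X T" and x: "x \<in> X"
  shows "bclosed S {q. ultrafilter_on S q \<and> Tp S T q x = x}"
proof (rule bclosedI)
  show "\<And>q. q \<in> {q. ultrafilter_on S q \<and> Tp S T q x = x} \<Longrightarrow> ultrafilter_on S q" by blast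
  fix p assume u: "ultrafilter_on S p" and h: "\<And>A. A \<in> p \<Longrightarrow> \<exists>q\<in>{q. ultrafilter_on S q \<and> Tp S T q x = x}. A \<in> q"
  have "Tp S T p x = x"
  proof (rule Tp_unique[OF u])
    fix W :: "'a set" assume W: "open W" "x \<in> W"
    let ?B = "{s\<in>S. T s x \<in> W}"
    show "?B \<in> p"
    proof (rule ccontr)
      assume "?B \<notin> p"
      then have "S - ?B \<in> p" using uf_compl[OF u, of ?B] by auto
      then obtain q where q: "ultrafilter_on S q" "Tp S T q x = x" "S - ?B \<in> q" using h by blast
      have "?B \<in> q" using Tp_prop(2)[OF ds q(1) x W(1)] q(2) W(2) by simp
      then show False using uf_not_both[OF q(1)] q(3) by blast
    qed
  qed
  then show "p \<in> {q. ultrafilter_on S q \<and> Tp S T q x = x}" using u by simp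
qed


lemma dss_facts:
  assumes "dense_subsemigroup S"
  shows "sg S" "S \<subseteq> {0<..}" "\<And>e. e > 0 \<Longrightarrow> S \<inter> {0<..<e} \<noteq> {}"
proof -
  show "sg S" using assms unfolding dense_subsemigroup_def sg_def by blast
  show "S \<subseteq> {0<..}" using assms unfolding dense_subsemigroup_def by blast
  fix e :: real assume e: "e > 0"
  have "e/2 \<in> closure S" using assms e unfolding dense_subsemigroup_def by auto
  then obtain y where y: "y \<in> S" "dist y (e/2) < e/2" using e unfolding closure_approachable
    by (metis half_gt_zero)
  then have "0 < y" "y < e" unfolding dist_real_def by (auto simp: abs_less_iff field_simps)
  then show "S \<inter> {0<..<e} \<noteq> {}" using y(1) by auto
qed

lemma mli_facts:
  assumes "minimal_left_ideal_of S (Oplus S) L"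
  shows "L \<noteq> {}" "L \<subseteq> Oplus S" "\<And>p q. p \<in> Oplus S \<Longrightarrow> q \<in> L \<Longrightarrow> uplus S p q \<in> L"
    "\<And>K. left_ideal_of S (Oplus S) K \<Longrightarrow> K \<subseteq> L \<Longrightarrow> K = L"
  using assms unfolding minimal_left_ideal_of_def left_ideal_of_def by blast+

lemma L_eq:
  assumes sg: "sg S" and pos: "S \<subseteq> {0<..}" and m: "minimal_left_ideal_of S (Oplus S) L" and r: "r \<in> L"
  shows "(\<lambda>q. uplus S q r) ` Oplus S = L"
proof (rule mli_facts(4)[OF m])
  have rO: "r \<in> Oplus S" using r mli_facts(2)[OF m] by blast
  show "left_ideal_of S (Oplus S) ((\<lambda>q. uplus S q r) ` Oplus S)"
    unfolding left_ideal_of_def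
  proof (intro conjI ballI)
    show "(\<lambda>q. uplus S q r) ` Oplus S \<noteq> {}" using rO by blast
    show "(\<lambda>q. uplus S q r) ` Oplus S \<subseteq> Oplus S" using Oplus_uplus[OF sg pos _ rO] by blast
    fix p w assume p: "p \<in> Oplus S" and w: "w \<in> (\<lambda>q. uplus S q r) ` Oplus S"
    then obtain q where q: "q \<in> Oplus S" "w = uplus S q r" by auto
    have "uplus S p w = uplus S (uplus S p q) r" using q(2) uplus_assoc[OF sg] by simp
    moreover have "uplus S p q \<in> Oplus S" by (rule Oplus_uplus[OF sg pos p q(1)])
    ultimately show "uplus S p w \<in> (\<lambda>q. uplus S q r) ` Oplus S" by simp
  qed
  show "(\<lambda>q. uplus S q r) ` Oplus S \<subseteq> L" using mli_facts(3)[OF m _ r] by blast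
qed

lemma L_bclosed:
  assumes sg: "sg S" and pos: "S \<subseteq> {0<..}" and m: "minimal_left_ideal_of S (Oplus S) L"
  shows "bclosed S L"
proof -
  obtain r where r: "r \<in> L" using mli_facts(1)[OF m] by blast
  have ur: "ultrafilter_on S r" using r mli_facts(2)[OF m] Oplus_iff by blast
  have "bclosed S ((\<lambda>q. uplus S q r) ` Oplus S)" by (rule bclosed_rimage[OF sg Oplus_bclosed ur])
  then show ?thesis using L_eq[OF sg pos m r] by simp
qed


lemma Oplus_uf: "q \<in> Oplus S \<Longrightarrow> ultrafilter_on S q"
  unfolding Oplus_iff by simp

lemma a_to_b:
  fixes T :: "real \<Rightarrow> 'a::t2_space \<Rightarrow> 'a"
  assumes dss: "dense_subsemigroup S" and ds: "dynamical_system S X T"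
    and m: "minimal_left_ideal_of S (Oplus S) L" and x: "x \<in> X"
    and ur: "unif_recurrent_near_zero S T x"
  shows "\<exists>u\<in>L. Tp S T u x = x"
proof -
  have sg: "sg S" and pos: "S \<subseteq> {0<..}" using dss_facts[OF dss] by auto
  obtain r where r: "r \<in> L" using mli_facts(1)[OF m] by blast
  have rO: "r \<in> Oplus S" using r mli_facts(2)[OF m] by blast
  have ur': "ultrafilter_on S r" using rO unfolding Oplus_iff by simp
  define B where "B = (\<lambda>W. {s\<in>S. T s x \<in> W})"
  define G where "G = (\<lambda>W. {t\<in>S. lshift S t (B W) \<in> r})"
  define Fam where "Fam = {A. \<exists>W e. open W \<and> x \<in> W \<and> e > (0::real) \<and> A = G W \<inter> {0<..<e}}"
  have Gmono: "G W \<subseteq> G W'" if "W \<subseteq> W'" for W W'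
  proof
    fix t assume "t \<in> G W"
    then have t: "t \<in> S" "lshift S t (B W) \<in> r" unfolding G_def by auto
    have "B W \<subseteq> B W'" using that unfolding B_def by auto
    then have "lshift S t (B W) \<subseteq> lshift S t (B W')" by (rule lshift_mono)
    then have "lshift S t (B W') \<in> r" by (rule uf_mono[OF ur' t(2) _ lshift_sub])
    then show "t \<in> G W'" unfolding G_def using t(1) by simp
  qed
  have "fip S Fam"
  proof (rule fip_directed)
    show "Fam \<subseteq> Pow S" unfolding Fam_def G_def by auto
    have "G UNIV \<inter> {0<..<1} \<in> Fam" unfolding Fam_def by (rule CollectI, rule exI[of _ UNIV], rule exI[of _ 1]) simp
    then show "Fam \<noteq> {}" by blast
  next
    fix A assume "A \<in> Fam"
    then obtain W e where W: "open W" "x \<in> W" "e > 0" "A = G W \<inter> {0<..<e}" unfolding Fam_def by blast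
    have "syndetic_near_zero S (B W)" using ur W(1,2) unfolding unif_recurrent_near_zero_def B_def by simp
    then have "\<exists>F. finite F \<and> F \<noteq> {} \<and> F \<subseteq> {0<..<e} \<inter> S \<and>
        (\<exists>d>0. S \<inter> {0<..<d} \<subseteq> (\<Union>t\<in>F. lshift S t (B W)))"
      unfolding syndetic_near_zero_def using W(3) by simp
    then obtain F d where F: "finite F" "F \<noteq> {}" "F \<subseteq> {0<..<e} \<inter> S" "d > 0"
      "S \<inter> {0<..<d} \<subseteq> (\<Union>t\<in>F. lshift S t (B W))"
      by blast
    have Sd: "S \<inter> {0<..<d} \<in> r" using rO F(4) unfolding Oplus_iff by simp
    have "(\<Union>t\<in>F. lshift S t (B W)) \<subseteq> S" using lshift_sub by blast
    then have "(\<Union>t\<in>F. lshift S t (B W)) \<in> r" using uf_mono[OF ur' Sd F(5)] by simp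
    then have "\<Union>((\<lambda>t. lshift S t (B W)) ` F) \<in> r" by simp
    moreover have "finite ((\<lambda>t. lshift S t (B W)) ` F)" using F(1) by simp
    moreover have "\<forall>Z\<in>(\<lambda>t. lshift S t (B W)) ` F. Z \<subseteq> S" using lshift_sub by auto
    ultimately obtain Z where Z: "Z \<in> (\<lambda>t. lshift S t (B W)) ` F" "Z \<in> r"
      using uf_finite_union[OF ur'] by metis
    then obtain t where t: "t \<in> F" "lshift S t (B W) \<in> r" by auto
    have "t \<in> A" using t F(3) W(4) unfolding G_def by auto
    then show "A \<noteq> {}" by blast
  next
    fix A1 A2 assume "A1 \<in> Fam" "A2 \<in> Fam"
    then obtain W1 e1 W2 e2 where W: "open W1" "x \<in> W1" "e1 > 0" "A1 = G W1 \<inter> {0<..<e1}"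
      "open W2" "x \<in> W2" "e2 > 0" "A2 = G W2 \<inter> {0<..<e2}" unfolding Fam_def by blast
    let ?C = "G (W1 \<inter> W2) \<inter> {0<..<min e1 e2}"
    have "?C \<in> Fam" unfolding Fam_def
      by (rule CollectI, rule exI[of _ "W1 \<inter> W2"], rule exI[of _ "min e1 e2"]) (use W in auto)
    moreover have "?C \<subseteq> A1 \<inter> A2" using Gmono[of "W1 \<inter> W2" W1] Gmono[of "W1 \<inter> W2" W2] W(4,8) by auto
    ultimately show "\<exists>C\<in>Fam. C \<subseteq> A1 \<inter> A2" by blast
  qed
  moreover have "Fam \<subseteq> Pow S" unfolding Fam_def G_def by auto
  ultimately obtain q where q: "ultrafilter_on S q" "Fam \<subseteq> q" using ultrafilter_exists by blast
  have memq: "G W \<inter> {0<..<e} \<in> q" if "open W" "x \<in> W" "e > 0" for W e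
  proof -
    have "G W \<inter> {0<..<e} \<in> Fam" unfolding Fam_def using that by blast
    then show ?thesis using q(2) by blast
  qed
  have qO: "q \<in> Oplus S" unfolding Oplus_iff
  proof (intro conjI allI impI)
    show "ultrafilter_on S q" by (rule q(1))
    fix e :: real assume "e > 0"
    then have "G UNIV \<inter> {0<..<e} \<in> q" using memq by simp
    moreover have "G UNIV \<inter> {0<..<e} \<subseteq> S \<inter> {0<..<e}" unfolding G_def by auto
    ultimately show "S \<inter> {0<..<e} \<in> q" by (rule uf_mono[OF q(1)]) auto
  qed
  have uL: "uplus S q r \<in> L" by (rule mli_facts(3)[OF m qO r])
  have "Tp S T (uplus S q r) x = x"
  proof (rule Tp_unique[OF uplus_uf[OF sg q(1) ur']])
    fix W :: "'a set" assume W: "open W" "x \<in> W"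
    have "G W \<inter> {0<..<1} \<in> q" using memq W by simp
    then have "G W \<in> q" by (rule uf_mono[OF q(1)]) (auto simp: G_def)
    then show "{s\<in>S. T s x \<in> W} \<in> uplus S q r" unfolding uplus_mem G_def B_def by simp
  qed
  then show ?thesis using uL by blast
qed

lemma b_to_d:
  fixes T :: "real \<Rightarrow> 'a::t2_space \<Rightarrow> 'a"
  assumes dss: "dense_subsemigroup S" and ds: "dynamical_system S X T"
    and m: "minimal_left_ideal_of S (Oplus S) L" and x: "x \<in> X"
    and b: "\<exists>u\<in>L. Tp S T u x = x"
  shows "\<exists>u\<in>L. uplus S u u = u \<and> Tp S T u x = x"
proof -
  have sg: "sg S" and pos: "S \<subseteq> {0<..}" using dss_facts[OF dss] by auto
  have LO: "L \<subseteq> Oplus S" by (rule mli_facts(2)[OF m])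
  define M where "M = L \<inter> {q. ultrafilter_on S q \<and> Tp S T q x = x}"
  have c: "bclosed S M" unfolding M_def
    by (rule bclosed_Int[OF L_bclosed[OF sg pos m] fix_bclosed[OF ds x]])
  obtain u0 where u0: "u0 \<in> L" "Tp S T u0 x = x" using b by blast
  have "ultrafilter_on S u0" by (rule Oplus_uf) (use u0(1) LO in blast)
  then have ne: "M \<noteq> {}" unfolding M_def using u0 by blast
  have smg: "uplus S p q \<in> M" if p: "p \<in> M" and q: "q \<in> M" for p q
  proof -
    have pO: "p \<in> Oplus S" and qL: "q \<in> L" using p q LO unfolding M_def by auto
    have up: "ultrafilter_on S p" and uq: "ultrafilter_on S q" and px: "Tp S T p x = x" and qx: "Tp S T q x = x"
      using p q unfolding M_def by auto
    have "Tp S T (uplus S p q) x = x" using Tp_comp[OF ds sg up uq x] px qx by simp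
    moreover have "uplus S p q \<in> L" by (rule mli_facts(3)[OF m pO qL])
    ultimately show ?thesis unfolding M_def using uplus_uf[OF sg up uq] by simp
  qed
  obtain e where "e \<in> M" "uplus S e e = e" using ellis[OF sg c ne smg] by blast
  then show ?thesis unfolding M_def by blast
qed

lemma c_to_d:
  fixes T :: "real \<Rightarrow> 'a::t2_space \<Rightarrow> 'a"
  assumes dss: "dense_subsemigroup S" and ds: "dynamical_system S X T"
    and m: "minimal_left_ideal_of S (Oplus S) L"
    and c: "\<exists>y\<in>X. \<exists>u\<in>L. uplus S u u = u \<and> Tp S T u y = x"
  shows "\<exists>u\<in>L. uplus S u u = u \<and> Tp S T u x = x"
proof -
  have sg: "sg S" using dss_facts[OF dss] by auto
  obtain y u where y: "y \<in> X" and u: "u \<in> L" "uplus S u u = u" "Tp S T u y = x" using c by blast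
  have uu: "ultrafilter_on S u" by (rule Oplus_uf) (use u(1) mli_facts(2)[OF m] in blast)
  have "Tp S T u x = Tp S T u (Tp S T u y)" using u(3) by simp
  also have "\<dots> = Tp S T (uplus S u u) y" using Tp_comp[OF ds sg uu uu y] by simp
  also have "\<dots> = x" using u(2,3) by simp
  finally show ?thesis using u by blast
qed


lemma syndetic_mono:
  assumes "syndetic_near_zero S D" "D \<subseteq> B"
  shows "syndetic_near_zero S B"
  unfolding syndetic_near_zero_def
proof (intro allI impI)
  fix e :: real assume e: "e > 0"
  have "\<exists>F. finite F \<and> F \<noteq> {} \<and> F \<subseteq> {0<..<e} \<inter> S \<and> (\<exists>d>0. S \<inter> {0<..<d} \<subseteq> (\<Union>t\<in>F. lshift S t D))"
    using assms(1) e unfolding syndetic_near_zero_def by simp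
  then obtain F d where F: "finite F" "F \<noteq> {}" "F \<subseteq> {0<..<e} \<inter> S" "d > 0"
      "S \<inter> {0<..<d} \<subseteq> (\<Union>t\<in>F. lshift S t D)" by blast
  have "(\<Union>t\<in>F. lshift S t D) \<subseteq> (\<Union>t\<in>F. lshift S t B)" using lshift_mono[OF assms(2)] by blast
  then have "S \<inter> {0<..<d} \<subseteq> (\<Union>t\<in>F. lshift S t B)" using F(5) by (rule order_trans[rotated])
  then have "\<exists>d>0. S \<inter> {0<..<d} \<subseteq> (\<Union>t\<in>F. lshift S t B)" using F(4) by (intro exI[of _ d]) simp
  then show "\<exists>F. finite F \<and> F \<noteq> {} \<and> F \<subseteq> {0<..<e} \<inter> S \<and> (\<exists>d>0. S \<inter> {0<..<d} \<subseteq> (\<Union>t\<in>F. lshift S t B))"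
    using F(1,2,3) by (intro exI[of _ F]) simp
qed

lemma b_to_a:
  fixes T :: "real \<Rightarrow> 'a::t2_space \<Rightarrow> 'a"
  assumes dss: "dense_subsemigroup S" and ds: "dynamical_system S X T"
    and m: "minimal_left_ideal_of S (Oplus S) L" and x: "x \<in> X"
    and b: "\<exists>u\<in>L. Tp S T u x = x"
  shows "unif_recurrent_near_zero S T x"
  unfolding unif_recurrent_near_zero_def
proof (intro allI impI)
  have sg: "sg S" and pos: "S \<subseteq> {0<..}" using dss_facts[OF dss] by auto
  have dens: "\<And>e. e > 0 \<Longrightarrow> S \<inter> {0<..<e} \<noteq> {}" using dss_facts[OF dss] by auto
  have LO: "L \<subseteq> Oplus S" by (rule mli_facts(2)[OF m])
  obtain u where u: "u \<in> L" "Tp S T u x = x" using b by blast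
  have uO: "u \<in> Oplus S" using u(1) LO by blast
  have uu: "ultrafilter_on S u" by (rule Oplus_uf[OF uO])
  fix W :: "'a set" assume W: "open W \<and> x \<in> W"
  have cK: "compact (X - W)" using compact_diff[OF ds_facts(1)[OF ds]] W by simp
  have xK: "x \<notin> X - W" using W by simp
  obtain V V' where V: "open V" "open V'" "x \<in> V" "X - W \<subseteq> V'" "V \<inter> V' = {}"
    using sep_compact_point[OF cK xK] by blast
  define C where "C = {s\<in>S. T s x \<in> V}"
  define D where "D = {z\<in>S. lshift S z C \<in> u}"
  have DB: "D \<subseteq> {s\<in>S. T s x \<in> W}"
  proof
    fix z assume "z \<in> D"
    then have z: "z \<in> S" "lshift S z C \<in> u" unfolding D_def by auto
    have zX: "T z x \<in> X" by (rule ds_facts(3)[OF ds z(1) x])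
    have "T z x \<in> W"
    proof (rule ccontr)
      assume "T z x \<notin> W"
      then have zV': "T z x \<in> V'" using zX V(4) by blast
      have "continuous_on X (T z)" by (rule ds_facts(2)[OF ds z(1)])
      then obtain A where A: "open A" "A \<inter> X = T z -` V' \<inter> X"
        using V(2) unfolding continuous_on_open_invariant by blast
      have xA: "x \<in> A" using A(2) x zV' by blast
      have "{y\<in>S. T y x \<in> A} \<in> u" using Tp_prop(2)[OF ds uu x A(1)] u(2) xA by simp
      then have "{y\<in>S. T y x \<in> A} \<inter> lshift S z C \<in> u" by (rule uf_int[OF uu _ z(2)])
      then have "{y\<in>S. T y x \<in> A} \<inter> lshift S z C \<noteq> {}" by (rule uf_ne[OF uu])
      then obtain y where y: "y \<in> {y\<in>S. T y x \<in> A} \<inter> lshift S z C" by blast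
      then have yS: "y \<in> S" and yA: "T y x \<in> A" and yC: "T (z + y) x \<in> V"
        unfolding lshift_def C_def by auto
      have yX: "T y x \<in> X" by (rule ds_facts(3)[OF ds yS x])
      have "T z (T y x) \<in> V'" using A(2) yA yX by blast
      moreover have "T z (T y x) = T (z + y) x" by (rule ds_facts(4)[OF ds z(1) yS x])
      ultimately show False using yC V(5) by auto
    qed
    then show "z \<in> {s\<in>S. T s x \<in> W}" using z(1) by simp
  qed
  have "syndetic_near_zero S D"
    unfolding syndetic_near_zero_def
  proof (intro allI impI)
    fix e :: real assume e: "e > 0"
    show "\<exists>F. finite F \<and> F \<noteq> {} \<and> F \<subseteq> {0<..<e} \<inter> S \<and> (\<exists>d>0. S \<inter> {0<..<d} \<subseteq> (\<Union>t\<in>F. lshift S t D))"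
    proof (rule ccontr)
      assume nsyn: "\<not> ?thesis"
      define Fam where "Fam = {A. \<exists>F d. finite F \<and> F \<subseteq> {0<..<e} \<inter> S \<and> d > (0::real) \<and>
                                   A = S \<inter> {0<..<d} - (\<Union>t\<in>F. lshift S t D)}"
      have FamS: "Fam \<subseteq> Pow S" unfolding Fam_def by auto
      have inFam: "S \<inter> {0<..<d} - (\<Union>t\<in>F. lshift S t D) \<in> Fam"
        if "finite F" "F \<subseteq> {0<..<e} \<inter> S" "d > 0" for F d
        unfolding Fam_def using that by blast
      have "fip S Fam"
      proof (rule fip_directed[OF FamS])
        show "Fam \<noteq> {}" using inFam[of "{}" 1] by auto
      next
        fix A assume "A \<in> Fam"
        then obtain F d where F: "finite F" "F \<subseteq> {0<..<e} \<inter> S" "d > 0"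
          "A = S \<inter> {0<..<d} - (\<Union>t\<in>F. lshift S t D)" unfolding Fam_def by blast
        show "A \<noteq> {}"
        proof (cases "F = {}")
          case True then show ?thesis using F(3,4) dens by simp
        next
          case False
          show ?thesis
          proof
            assume "A = {}"
            then have "S \<inter> {0<..<d} \<subseteq> (\<Union>t\<in>F. lshift S t D)" using F(4) by blast
            then have "\<exists>d>0. S \<inter> {0<..<d} \<subseteq> (\<Union>t\<in>F. lshift S t D)" using F(3) by (intro exI[of _ d]) simp
            then have "\<exists>F. finite F \<and> F \<noteq> {} \<and> F \<subseteq> {0<..<e} \<inter> S \<and> (\<exists>d>0. S \<inter> {0<..<d} \<subseteq> (\<Union>t\<in>F. lshift S t D))"
              using F(1,2) False by (intro exI[of _ F]) simp
            then show False using nsyn by simp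
          qed
        qed
      next
        fix A1 A2 assume "A1 \<in> Fam" "A2 \<in> Fam"
        then obtain F1 d1 F2 d2 where F: "finite F1" "F1 \<subseteq> {0<..<e} \<inter> S" "d1 > 0"
          "A1 = S \<inter> {0<..<d1} - (\<Union>t\<in>F1. lshift S t D)"
          "finite F2" "F2 \<subseteq> {0<..<e} \<inter> S" "d2 > 0"
          "A2 = S \<inter> {0<..<d2} - (\<Union>t\<in>F2. lshift S t D)" unfolding Fam_def by blast
        have "S \<inter> {0<..<min d1 d2} - (\<Union>t\<in>F1 \<union> F2. lshift S t D) \<in> Fam"
          using inFam[of "F1 \<union> F2" "min d1 d2"] F by simp
        moreover have "S \<inter> {0<..<min d1 d2} - (\<Union>t\<in>F1 \<union> F2. lshift S t D) \<subseteq> A1 \<inter> A2"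
          using F(4,8) by auto
        ultimately show "\<exists>C\<in>Fam. C \<subseteq> A1 \<inter> A2" by blast
      qed
      then obtain q where q: "ultrafilter_on S q" "Fam \<subseteq> q" using ultrafilter_exists[OF FamS] by blast
      have qO: "q \<in> Oplus S" unfolding Oplus_iff
      proof (intro conjI allI impI)
        show "ultrafilter_on S q" by (rule q(1))
        fix d :: real assume "d > 0"
        then have "S \<inter> {0<..<d} - (\<Union>t\<in>{}. lshift S t D) \<in> Fam" using inFam[of "{}" d] by simp
        then show "S \<inter> {0<..<d} \<in> q" using q(2) by auto
      qed
      have notin: "lshift S t D \<notin> q" if t: "t \<in> S" "0 < t" "t < e" for t
      proof
        assume tD: "lshift S t D \<in> q"
        have "S \<inter> {0<..<1} - (\<Union>t\<in>{t}. lshift S t D) \<in> Fam" using inFam[of "{t}" 1] t by simp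
        then have "S \<inter> {0<..<1} - lshift S t D \<in> q" using q(2) by auto
        then have "(S \<inter> {0<..<1} - lshift S t D) \<inter> lshift S t D \<in> q" by (rule uf_int[OF q(1) _ tD])
        moreover have "(S \<inter> {0<..<1} - lshift S t D) \<inter> lshift S t D = {}" by blast
        ultimately show False using uf_empty[OF q(1)] by simp
      qed
      define w where "w = uplus S q u"
      have wL: "w \<in> L" unfolding w_def by (rule mli_facts(3)[OF m qO u(1)])
      have uw: "ultrafilter_on S w" unfolding w_def by (rule uplus_uf[OF sg q(1) uu])
      have "u \<in> (\<lambda>p. uplus S p w) ` Oplus S" using L_eq[OF sg pos m wL] u(1) by simp
      then obtain p' where p': "p' \<in> Oplus S" "u = uplus S p' w" by auto
      have up': "ultrafilter_on S p'" by (rule Oplus_uf[OF p'(1)])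
      let ?y = "Tp S T w x"
      have yX: "?y \<in> X" by (rule Tp_prop(1)[OF ds uw x])
      have "Tp S T p' ?y = x" using Tp_comp[OF ds sg up' uw x] p'(2) u(2) by simp
      then have P1: "{s\<in>S. T s ?y \<in> V} \<in> p'" using Tp_prop(2)[OF ds up' yX V(1)] V(3) by simp
      have P2: "S \<inter> {0<..<e} \<in> p'" using p'(1) e unfolding Oplus_iff by simp
      have "{s\<in>S. T s ?y \<in> V} \<inter> (S \<inter> {0<..<e}) \<in> p'" by (rule uf_int[OF up' P1 P2])
      then have "{s\<in>S. T s ?y \<in> V} \<inter> (S \<inter> {0<..<e}) \<noteq> {}" by (rule uf_ne[OF up'])
      then obtain t where "t \<in> {s\<in>S. T s ?y \<in> V} \<inter> (S \<inter> {0<..<e})" by blast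
      then have t: "t \<in> S" "T t ?y \<in> V" "0 < t" "t < e" by auto
      have "lshift S t C \<in> w" unfolding C_def by (rule shift_lemma[OF ds sg uw x t(1) V(1) t(2)])
      then have Q: "{s\<in>S. lshift S s (lshift S t C) \<in> u} \<in> q" unfolding w_def uplus_mem by simp
      have "{s\<in>S. lshift S s (lshift S t C) \<in> u} \<subseteq> lshift S t D"
      proof
        fix s assume "s \<in> {s\<in>S. lshift S s (lshift S t C) \<in> u}"
        then have s: "s \<in> S" "lshift S s (lshift S t C) \<in> u" by auto
        have "lshift S (t + s) C \<in> u" using s(2) lshift_lshift[OF sg s(1) t(1)] by simp
        then have "t + s \<in> D" unfolding D_def using sgD[OF sg t(1) s(1)] by simp
        then show "s \<in> lshift S t D" unfolding lshift_def using s(1) by simp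
      qed
      then have "lshift S t D \<in> q" by (rule uf_mono[OF q(1) Q _ lshift_sub])
      then show False using notin t by blast
    qed
  qed
  then show "syndetic_near_zero S {s\<in>S. T s x \<in> W}" by (rule syndetic_mono[OF _ DB])
qed


theorem lemma2p7:
  fixes S :: "real set" and X :: "'a::t2_space set" and T :: "real \<Rightarrow> 'a \<Rightarrow> 'a"
    and L :: "real set set set" and x :: 'a
  assumes "dense_subsemigroup S"
    and "dynamical_system S X T"
    and "minimal_left_ideal_of S (Oplus S) L"
    and "x \<in> X"
  shows "(unif_recurrent_near_zero S T x \<longleftrightarrow> (\<exists>u\<in>L. Tp S T u x = x))
       \<and> (unif_recurrent_near_zero S T x \<longleftrightarrow>
            (\<exists>y\<in>X. \<exists>u\<in>L. uplus S u u = u \<and> Tp S T u y = x))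
       \<and> (unif_recurrent_near_zero S T x \<longleftrightarrow> (\<exists>u\<in>L. uplus S u u = u \<and> Tp S T u x = x))"
proof -
  let ?a = "unif_recurrent_near_zero S T x"
  let ?b = "\<exists>u\<in>L. Tp S T u x = x"
  let ?c = "\<exists>y\<in>X. \<exists>u\<in>L. uplus S u u = u \<and> Tp S T u y = x"
  let ?d = "\<exists>u\<in>L. uplus S u u = u \<and> Tp S T u x = x"
  have ab: "?a \<Longrightarrow> ?b" using a_to_b[OF assms] .
  have ba: "?b \<Longrightarrow> ?a" using b_to_a[OF assms] .
  have bd: "?b \<Longrightarrow> ?d" using b_to_d[OF assms] .
  have db: "?d \<Longrightarrow> ?b" by blast
  have dc: "?d \<Longrightarrow> ?c" using assms(4) by blast
  have cd: "?c \<Longrightarrow> ?d" using c_to_d[OF assms(1-3)] .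
  show ?thesis using ab ba bd db dc cd by blast
qed


end
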